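(* Let $(a_n)_{n\ge1}$ be a sequence of real numbers with $\lim_{n\to\infty}a_n=\infty$, and let $\gamma>0$. Then there exists a sequence of positive integers $(r_n)_{n\ge0}$ such that $$\limsup_{n\to\infty}\frac{2^{n+1}a_n}{\sum_{i=1}^{n}2^i\,r_0r_1\cdots r_{i-1}}=\gamma.$$ Here the denominator is $2r_0+4r_0r_1+\dots+2^nr_0\cdots r_{n-1}$. *)

theory Defs
  imports "HOL-Analysis.Analysis"
begin

end

theory Submission
  imports Defs
begin

definition good :: "(nat \<Rightarrow> real) \<Rightarrow> real \<Rightarrow> nat \<Rightarrow> nat \<Rightarrow> nat \<Rightarrow> nat \<Rightarrow> bool" where
 "good a g m s q J \<longleftrightarrow> s < J \<and> 0 < a J \<and> (\<forall>i\<le>J. a i \<le> a J) \<and>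
    (\<forall>i\<le>s+m+1. 2 * a i \<le> a J) \<and> real (m+1) * g * real q \<le> a J"

lemma good_ex:
  assumes "filterlim a at_top sequentially"
  shows "\<exists>J. good a g m s q J"
proof -
  define B where "B = max (2 * Max (a ` {..s+m+1})) (max (real (m+1) * g * real q) 0) + 1"
  from assms have "eventually (\<lambda>n. a n \<ge> B) sequentially" by (simp add: filterlim_at_top)
  then obtain N where N: "a N \<ge> B" by (auto simp: eventually_sequentially)
  have "Max (a ` {..N}) \<in> a ` {..N}" by (rule Max_in) auto
  then obtain J where J: "J \<le> N" "a J = Max (a ` {..N})" by (metis atMost_iff imageE)
  have mx: "\<forall>i\<le>N. a i \<le> a J" using J by auto
  have aJ: "a J \<ge> B" using mx N by auto
  have B0: "B > 0" unfolding B_def by auto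
  have small: "\<forall>i\<le>s+m+1. 2 * a i < a J"
  proof (intro allI impI)
    fix i assume "i \<le> s+m+1"
    then have "a i \<le> Max (a ` {..s+m+1})" by (intro Max_ge) auto
    then have "2 * a i \<le> B - 1" unfolding B_def by linarith
    then show "2 * a i < a J" using aJ by linarith
  qed
  have "s < J"
  proof (rule ccontr)
    assume "\<not> s < J"
    then have "2 * a J < a J" using small by auto
    then show False using aJ B0 by linarith
  qed
  moreover have "real (m+1) * g * real q \<le> a J" using aJ unfolding B_def by linarith
  ultimately show ?thesis unfolding good_def using aJ B0 mx J(1) small
    by (intro exI[of _ J]) (auto simp: less_imp_le)
qed

definition Jn where "Jn a g m s q = (SOME J. good a g m s q J)"
definition kk where "kk a g m s q = nat \<lceil>a (Jn a g m s q) / (g * real q)\<rceil>"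

primrec stg :: "(nat \<Rightarrow> real) \<Rightarrow> real \<Rightarrow> nat \<Rightarrow> nat \<times> nat" where
  "stg a g 0 = (0, 1)"
| "stg a g (Suc m) = (let s = fst (stg a g m); q = snd (stg a g m) in
      (Jn a g m s q, q * kk a g m s q))"

lemma geo_sum:
  assumes "s \<le> j"
  shows "(\<Sum>i\<in>{s<..j}. (2::real)^i) = 2^(j+1) - 2^(s+1)"
  using assms
proof (induction j rule: dec_induct)
  case base then show ?case by simp
next
  case (step n)
  have "{s<..Suc n} = insert (Suc n) {s<..n}" using step.hyps by auto
  then show ?case using step by simp
qed

theorem mainTheorem13:
  fixes a :: "nat \<Rightarrow> real" and \<gamma> :: real
  assumes "filterlim a at_top sequentially"
    and "\<gamma> > 0"
  shows "\<exists>r :: nat \<Rightarrow> nat. (\<forall>n. r n > 0) \<and>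
    limsup (\<lambda>n. ereal (2 ^ (n + 1) * a n /
        (\<Sum>i = 1..n. 2 ^ i * (\<Prod>j < i. real (r j))))) = ereal \<gamma>"
proof -
  note A = assms
  define s where "s m = fst (stg a \<gamma> m)" for m
  define Q where "Q m = snd (stg a \<gamma> m)" for m
  have sS: "s (Suc m) = Jn a \<gamma> m (s m) (Q m)" for m by (simp add: s_def Q_def Let_def)
  have QS: "Q (Suc m) = Q m * kk a \<gamma> m (s m) (Q m)" for m by (simp add: s_def Q_def Let_def)
  have s0: "s 0 = 0" and Q0: "Q 0 = 1" by (simp_all add: s_def Q_def)
  have gd: "good a \<gamma> m (s m) (Q m) (s (Suc m))" for m
    unfolding sS Jn_def by (rule someI_ex[OF good_ex[OF A(1)]])
  have Qpos: "Q m \<ge> 1" for m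
  proof (induction m)
    case 0 then show ?case by (simp add: Q0)
  next
    case (Suc m)
    have "a (s (Suc m)) > 0" using gd[of m] by (simp add: good_def)
    then have "a (s (Suc m)) / (\<gamma> * real (Q m)) > 0" using Suc A(2) by simp
    then have "kk a \<gamma> m (s m) (Q m) \<ge> 1" unfolding kk_def sS[symmetric] by linarith
    then show ?case using Suc by (simp add: QS)
  qed
  have Qb: "real (Q (Suc m)) \<ge> a (s (Suc m)) / \<gamma> \<and> real (Q (Suc m)) \<le> a (s (Suc m)) / \<gamma> + real (Q m)" for m
  proof -
    define x where "x = a (s (Suc m)) / (\<gamma> * real (Q m))"
    have qp: "real (Q m) > 0" using Qpos[of m] by simp
    have "a (s (Suc m)) > 0" using gd[of m] by (simp add: good_def)
    then have xp: "x > 0" using qp A(2) by (simp add: x_def)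
    have e: "real (Q (Suc m)) = real (Q m) * of_int \<lceil>x\<rceil>"
      using xp by (simp add: QS kk_def sS[symmetric] x_def[symmetric])
    have qx: "real (Q m) * x = a (s (Suc m)) / \<gamma>" using qp A(2) by (simp add: x_def field_simps)
    have "real (Q m) * x \<le> real (Q m) * of_int \<lceil>x\<rceil>" using qp by (intro mult_left_mono) auto
    moreover have "real (Q m) * of_int \<lceil>x\<rceil> \<le> real (Q m) * (x + 1)" using qp
      by (intro mult_left_mono) linarith+
    ultimately show ?thesis using e qx by (simp add: algebra_simps)
  qed
  have smono: "strict_mono s" unfolding strict_mono_Suc_iff using gd by (simp add: good_def)
  have sge: "m \<le> s m" for m using smono by (rule strict_mono_imp_increasing)
  have Qdvd: "m \<le> m' \<Longrightarrow> Q m dvd Q m'" for m m'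
  proof (induction m' rule: dec_induct)
    case base then show ?case by simp
  next
    case (step n) then show ?case by (simp add: QS)
  qed
  have Qmono: "m \<le> m' \<Longrightarrow> Q m \<le> Q m'" for m m'
    using Qdvd[of m m'] Qpos[of m'] by (simp add: dvd_imp_le)
  define L where "L i = (LEAST m. i \<le> s m)" for i
  have Lex: "i \<le> s (L i)" for i unfolding L_def by (rule LeastI[of _ i]) (rule sge)
  have Lmin: "i \<le> s m \<Longrightarrow> L i \<le> m" for i m unfolding L_def by (rule Least_le)
  have Lmono: "i \<le> j \<Longrightarrow> L i \<le> L j" for i j using Lex[of j] Lmin[of i "L j"] by simp
  define P where "P i = Q (L i)" for i
  have Ppos: "P i \<ge> 1" for i unfolding P_def by (rule Qpos)
  have Pdvd: "P i dvd P (Suc i)" for i unfolding P_def by (rule Qdvd) (rule Lmono; simp)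
  have Pmono: "i \<le> j \<Longrightarrow> P i \<le> P j" for i j unfolding P_def by (rule Qmono) (rule Lmono)
  have Pstage: "P i = Q (Suc m)" if "s m < i" "i \<le> s (Suc m)" for i m
  proof -
    have "L i \<le> Suc m" using Lmin that by simp
    moreover have "\<not> L i \<le> m"
    proof
      assume "L i \<le> m"
      then have "s (L i) \<le> s m" using smono by (simp add: strict_mono_less_eq)
      then show False using Lex[of i] that by simp
    qed
    ultimately have "L i = Suc m" by simp
    then show ?thesis by (simp add: P_def)
  qed
  have stage_ex: "\<exists>m. s m < n \<and> n \<le> s (Suc m)" if "n \<ge> 1" for n
  proof -
    have "L n \<noteq> 0" using Lex[of n] that s0 by (cases "L n") auto
    then obtain m where m: "L n = Suc m" by (cases "L n") auto
    have "\<not> n \<le> s m" using Lmin[of n m] m by auto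
    then show ?thesis using Lex[of n] m by (intro exI[of _ m]) auto
  qed
  define r where "r j = P (Suc j) div P j" for j
  have rpos: "\<forall>n. r n > 0"
  proof
    fix n
    have "P n \<le> P (Suc n)" by (rule Pmono) simp
    then show "r n > 0" using Ppos[of n] by (simp add: r_def div_greater_zero_iff)
  qed
  have prodP: "(\<Prod>j<i. real (r j)) = real (P i)" for i
  proof (induction i)
    case 0
    have "L 0 = 0" using Lmin[of 0 0] by simp
    then show ?case by (simp add: P_def Q0)
  next
    case (Suc i)
    have "P i * r i = P (Suc i)" unfolding r_def using Pdvd[of i] by (rule dvd_mult_div_cancel)
    then have "real (P i) * real (r i) = real (P (Suc i))" by (metis of_nat_mult)
    then show ?case using Suc by simp
  qed
  define D where "D n = (\<Sum>i=1..n. 2^i * real (P i))" for n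
  define x where "x n = 2 ^ (n + 1) * a n / D n" for n
  have xeq: "(\<lambda>n. ereal (2 ^ (n + 1) * a n /
        (\<Sum>i = 1..n. 2 ^ i * (\<Prod>j < i. real (r j))))) = (\<lambda>n. ereal (x n))"
    by (simp add: x_def D_def prodP)
  have stage: "x j \<le> \<gamma> * (real m + 2) / (real m + 1) \<and> (j = s (Suc m) \<longrightarrow> x j \<ge> \<gamma> * (real m + 1) / (real m + 2))"
    if j: "s m < j" "j \<le> s (Suc m)" for m j
  proof -
    define J where "J = s (Suc m)"
    define QQ where "QQ = real (Q (Suc m))"
    define q where "q = real (Q m)"
    have QQp: "QQ > 0" using Qpos[of "Suc m"] by (simp add: QQ_def)
    have qp: "q > 0" using Qpos[of m] by (simp add: q_def)
    have g: "s m < J" "0 < a J" "\<forall>i\<le>J. a i \<le> a J" "\<forall>i\<le>s m+m+1. 2 * a i \<le> a J"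
       "real (m+1) * \<gamma> * q \<le> a J" using gd[of m] by (auto simp: good_def J_def q_def)
    have QQb: "QQ \<ge> a J / \<gamma>" "QQ \<le> a J / \<gamma> + q" using Qb[of m] by (auto simp: QQ_def J_def q_def)
    have uQ: "a J \<le> \<gamma> * QQ" using QQb(1) A(2) by (simp add: field_simps)
    have Pj: "real (P i) \<le> QQ" if "i \<le> j" for i
      using Pmono[OF that] Pstage[OF j] by (simp add: QQ_def)
    have Dup: "D j \<le> 2^(j+1) * QQ"
    proof -
      have "D j \<le> (\<Sum>i=1..j. 2^i * QQ)" unfolding D_def
        by (intro sum_mono mult_left_mono Pj) auto
      also have "\<dots> = QQ * (\<Sum>i\<in>{0<..j}. (2::real)^i)"
      proof -
        have "{1..j} = {0<..j}" by auto
        then show ?thesis by (simp add: sum_distrib_left mult.commute)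
      qed
      also have "\<dots> = QQ * (2^(j+1) - 2)" using geo_sum[of 0 j] by simp
      also have "\<dots> \<le> 2^(j+1) * QQ" using QQp by simp
      finally show ?thesis .
    qed
    define G where "G = (2::real)^(j+1) - 2^(s m+1)"
    have Dlow: "D j \<ge> QQ * G"
    proof -
      have "QQ * G = (\<Sum>i\<in>{s m<..j}. 2^i * real (P i))"
      proof -
        have "(\<Sum>i\<in>{s m<..j}. 2^i * real (P i)) = (\<Sum>i\<in>{s m<..j}. QQ * 2^i)"
          using Pstage j by (intro sum.cong) (auto simp: QQ_def)
        also have "\<dots> = QQ * G" unfolding G_def using geo_sum[of "s m" j] j
          by (simp add: sum_distrib_left[symmetric])
        finally show ?thesis by simp
      qed
      also have "\<dots> \<le> D j" unfolding D_def
        by (intro sum_mono2) auto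
      finally show ?thesis .
    qed
    have Gp: "G \<ge> 2^j"
    proof -
      have "(2::real)^(s m + 1) \<le> 2^j" using j by (intro power_increasing) auto
      then show ?thesis unfolding G_def by simp
    qed
    have Dp: "D j > 0" using Dlow Gp QQp
      by (smt (verit) mult_pos_pos zero_less_power)
    have up: "x j \<le> \<gamma> * (real m + 2) / (real m + 1)"
    proof (cases "a j \<le> 0")
      case True
      then have "x j \<le> 0" unfolding x_def using Dp
        by (simp add: divide_nonpos_pos mult_nonneg_nonpos)
      also have "0 \<le> \<gamma> * (real m + 2) / (real m + 1)" using A(2) by simp
      finally show ?thesis .
    next
      case False
      have ajJ: "a j \<le> a J" using g(3) j by (simp add: J_def)
      have key: "2^(j+1) * a j * (real m + 1) \<le> \<gamma> * (real m + 2) * D j"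
      proof (cases "j \<le> s m + m + 1")
        case True
        have "2 * a j \<le> a J" using g(4) True by simp
        have "2^(j+1) * a j = 2^j * (2 * a j)" by simp
        also have "\<dots> \<le> G * (\<gamma> * QQ)" 
        proof (rule mult_mono)
          show "2 * a j \<le> \<gamma> * QQ" using \<open>2 * a j \<le> a J\<close> uQ by linarith
          show "0 \<le> G" using Gp by (smt (verit) zero_le_power)
        qed (use Gp False in auto)
        also have "\<dots> = \<gamma> * (QQ * G)" by simp
        also have "\<dots> \<le> \<gamma> * D j" using Dlow A(2) by simp
        finally have "2^(j+1) * a j \<le> \<gamma> * D j" .
        then have "2^(j+1) * a j * (real m + 1) \<le> \<gamma> * D j * (real m + 1)"
          by (intro mult_right_mono) auto
        also have "\<dots> \<le> \<gamma> * D j * (real m + 2)" using A(2) Dp by simp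
        finally show ?thesis by (simp add: mult_ac)
      next
        case nT: False
        have "(2::real)^(m+2) \<ge> real m + 2"
        proof -
          have "m + 2 < (2::nat)^(m+2)" by (rule less_exp)
          then have "real (m+2) \<le> real ((2::nat)^(m+2))" by linarith
          then show ?thesis by simp
        qed
        have "(2::real)^(j+1) = 2^(s m + 1) * 2^(j - s m)" using j
          by (simp add: power_add[symmetric])
        moreover have "(2::real)^(m+2) \<le> 2^(j - s m)" using nT by (intro power_increasing) auto
        ultimately have "2^(s m+1) * (real m + 2) \<le> (2::real)^(j+1)"
          using \<open>(2::real)^(m+2) \<ge> real m + 2\<close>
          by (smt (verit) mult_left_mono zero_le_power)
        then have Gm: "2^(j+1) * (real m + 1) \<le> G * (real m + 2)" unfolding G_def
          by (simp add: algebra_simps)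
        have "2^(j+1) * a j * (real m + 1) = a j * (2^(j+1) * (real m + 1))" by simp
        also have "\<dots> \<le> (\<gamma> * QQ) * (G * (real m + 2))" 
        proof (rule mult_mono)
          show "a j \<le> \<gamma> * QQ" using ajJ uQ by linarith
          show "0 \<le> \<gamma> * QQ" using uQ g(2) by linarith
        qed (use Gm False in auto)
        also have "\<dots> = \<gamma> * (real m + 2) * (QQ * G)" by simp
        also have "\<dots> \<le> \<gamma> * (real m + 2) * D j" using Dlow A(2) by (intro mult_left_mono) auto
        finally show ?thesis .
      qed
      show ?thesis unfolding x_def using key Dp
        by (simp add: pos_divide_le_eq le_divide_eq field_simps)
    qed
    have low: "x j \<ge> \<gamma> * (real m + 1) / (real m + 2)" if jJ: "j = s (Suc m)"
    proof -
      have aJ: "a j = a J" using jJ by (simp add: J_def)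
      have "\<gamma> * QQ * (real m + 1) \<le> (a J + \<gamma> * q) * (real m + 1)"
        using QQb(2) A(2) by (intro mult_right_mono) (auto simp: field_simps)
      also have "\<dots> \<le> a J * (real m + 2)" using g(5) by (simp add: algebra_simps)
      finally have k1: "\<gamma> * QQ * (real m + 1) \<le> a J * (real m + 2)" .
      have k2: "2^(j+1) * a j * QQ \<le> 2^(j+1) * a j * QQ" by simp
      have "\<gamma> * (real m + 1) * D j \<le> \<gamma> * (real m + 1) * (2^(j+1) * QQ)"
        using Dup A(2) by (intro mult_left_mono) auto
      also have "\<dots> = 2^(j+1) * (\<gamma> * QQ * (real m + 1))" by simp
      also have "\<dots> \<le> 2^(j+1) * (a J * (real m + 2))" using k1 by (intro mult_left_mono) auto
      finally have "\<gamma> * (real m + 1) * D j \<le> 2^(j+1) * a j * (real m + 2)" using aJ by simp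
      then show ?thesis unfolding x_def using Dp
        by (simp add: pos_le_divide_eq divide_le_eq field_simps)
    qed
    show ?thesis using up low by auto
  qed
  have upper: "\<exists>N. \<forall>n\<ge>N. x n < \<gamma> + e" if e: "e > 0" for e
  proof -
    obtain M :: nat where M: "\<gamma> / e < real M" using reals_Archimedean2 by blast
    have Me: "\<gamma> / (real M + 1) < e"
      using M e A(2) by (simp add: divide_less_eq field_simps)
    show ?thesis
    proof (intro exI[of _ "s M + 1"] allI impI)
      fix n assume n: "s M + 1 \<le> n"
      obtain m where m: "s m < n" "n \<le> s (Suc m)" using stage_ex[of n] n by auto
      have "M \<le> m"
      proof (rule ccontr)
        assume "\<not> M \<le> m"
        then have "s (Suc m) \<le> s M" using smono by (simp add: strict_mono_less_eq)
        then show False using m n by simp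
      qed
      have "x n \<le> \<gamma> * (real m + 2) / (real m + 1)" using stage[OF m] by simp
      also have "\<dots> = \<gamma> + \<gamma> / (real m + 1)" by (simp add: field_simps)
      also have "\<gamma> / (real m + 1) \<le> \<gamma> / (real M + 1)" using \<open>M \<le> m\<close> A(2)
        by (intro divide_left_mono) auto
      finally show "x n < \<gamma> + e" using Me by linarith
    qed
  qed
  have lower: "\<exists>n\<ge>N. x n > e" if e: "e < \<gamma>" for e N
  proof -
    obtain m0 :: nat where m0: "\<gamma> / (\<gamma> - e) < real m0" using reals_Archimedean2 by blast
    define m where "m = max m0 N"
    have "\<gamma> / (\<gamma> - e) < real m + 2" using m0 unfolding m_def by linarith
    then have "\<gamma> < (\<gamma> - e) * (real m + 2)" using e by (simp add: divide_less_eq mult.commute)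
    then have lt: "e < \<gamma> * (real m + 1) / (real m + 2)" by (simp add: field_simps)
    have "s m < s (Suc m)" using smono by (simp add: strict_mono_less)
    then have "x (s (Suc m)) \<ge> \<gamma> * (real m + 1) / (real m + 2)" using stage[of m "s (Suc m)"] by simp
    moreover have "N \<le> s (Suc m)" using sge[of "Suc m"] unfolding m_def by simp
    ultimately show ?thesis using lt by (intro exI[of _ "s (Suc m)"]) auto
  qed
  have le: "limsup (\<lambda>n. ereal (x n)) \<le> ereal \<gamma>"
  proof (subst Limsup_le_iff, intro allI impI)
    fix y :: ereal assume y: "y > ereal \<gamma>"
    show "eventually (\<lambda>n. y > ereal (x n)) sequentially"
    proof (cases y)
      case (real t)
      then have "t - \<gamma> > 0" using y by simp
      from upper[OF this] obtain N where "\<forall>n\<ge>N. x n < \<gamma> + (t - \<gamma>)" by blast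
      then show ?thesis using real by (auto simp: eventually_sequentially)
    next
      case PInf then show ?thesis by simp
    next
      case MInf then show ?thesis using y by simp
    qed
  qed
  have ge: "ereal \<gamma> \<le> limsup (\<lambda>n. ereal (x n))"
  proof (rule ccontr)
    assume "\<not> ?thesis"
    then have lt: "limsup (\<lambda>n. ereal (x n)) < ereal \<gamma>" by simp
    then obtain y where y: "limsup (\<lambda>n. ereal (x n)) < y" "y < ereal \<gamma>" using dense by blast
    have ev: "eventually (\<lambda>n. y > ereal (x n)) sequentially"
      using Limsup_le_iff[where C="limsup (\<lambda>n. ereal (x n))" and F=sequentially and X="\<lambda>n. ereal (x n)"] y(1) by auto
    then obtain N where N: "\<forall>n\<ge>N. y > ereal (x n)" by (auto simp: eventually_sequentially)
    show False
    proof (cases y)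
      case (real t)
      then have "t < \<gamma>" using y by simp
      from lower[OF this, of N] obtain n where "n \<ge> N" "x n > t" by blast
      then show False using N real by force
    next
      case PInf then show False using y by simp
    next
      case MInf then show False using y by simp
    qed
  qed
  show ?thesis using rpos le ge xeq by (intro exI[of _ r]) (simp add: antisym)
qed

end
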